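(* Let $\mathcal{D}$ be a $\{K_3,K_4\}$-decomposition of $K_{18}$ with $\alpha=13$, let $W$ be the set of vertices $x$ with $\alpha_x\ge 2$, and for $i\in\{0,1,2,3\}$ let $t_i$ be the number of copies of $K_3$ in $\mathcal{D}$ having exactly $i$ vertices in $W$. Then $(t_0,t_1,t_2,t_3)\neq(1,1,6,5)$.
   Context: A $\{K_3,K_4\}$-decomposition of $K_v$ is a collection of subgraphs, each isomorphic to $K_3$ or $K_4$, such that every edge of $K_v$ lies in exactly one of them. $\alpha$ is the number of copies of $K_3$ in the decomposition, and for a vertex $x$, $\alpha_x$ is the number of copies of $K_3$ in the decomposition containing $x$. *)

theory Defs
  imports Main
begin

text \<open>A copy of K_3 or K_4 in K_V is determined by its vertex set (a 3- or 4-subset of V).\<close>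

definition K34_decomp :: "'a set \<Rightarrow> 'a set set \<Rightarrow> bool" where
  "K34_decomp V D \<longleftrightarrow>
     (\<forall>B\<in>D. B \<subseteq> V \<and> (card B = 3 \<or> card B = 4)) \<and>
     (\<forall>x\<in>V. \<forall>y\<in>V. x \<noteq> y \<longrightarrow> (\<exists>!B. B \<in> D \<and> x \<in> B \<and> y \<in> B))"

definition triangles :: "'a set set \<Rightarrow> 'a set set" where
  "triangles D = {B \<in> D. card B = 3}"

definition alpha :: "'a set set \<Rightarrow> nat" where
  "alpha D = card (triangles D)"

definition alpha_at :: "'a set set \<Rightarrow> 'a \<Rightarrow> nat" where
  "alpha_at D x = card {B \<in> triangles D. x \<in> B}"

end

theory Submission
  imports Defs
begin

lemma dc:
  assumes "finite F" "finite S"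
  shows "(\<Sum>B\<in>F. card (B \<inter> S)) = (\<Sum>x\<in>S. card {B\<in>F. x \<in> B})"
proof -
  have 1: "card (B \<inter> S) = (\<Sum>x\<in>S. if x \<in> B then 1 else 0)" for B
  proof -
    have "B \<inter> S = {x\<in>S. x \<in> B}" by auto
    then show ?thesis using assms(2) by (simp add: sum.inter_filter[symmetric])
  qed
  have 2: "card {B\<in>F. x \<in> B} = (\<Sum>B\<in>F. if x \<in> B then 1 else 0)" for x
    using assms(1) by (simp add: sum.inter_filter[symmetric])
  show ?thesis unfolding 1 2 by (rule sum.swap)
qed

lemma decomp_fin:
  assumes "K34_decomp V D" "finite V"
  shows "finite D"
proof -
  have "D \<subseteq> Pow V" using assms(1) unfolding K34_decomp_def by auto
  then show ?thesis using assms(2) finite_subset by blast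
qed

lemma uniq:
  assumes "K34_decomp V D" "B \<in> D" "B' \<in> D" "x \<in> B" "y \<in> B" "x \<in> B'" "y \<in> B'" "x \<noteq> y"
  shows "B = B'"
proof -
  have "B \<subseteq> V" using assms(1,2) unfolding K34_decomp_def by auto
  then have "x \<in> V" "y \<in> V" using assms by auto
  then have "\<exists>!B. B \<in> D \<and> x \<in> B \<and> y \<in> B" using assms(1,8) unfolding K34_decomp_def by auto
  then show ?thesis using assms by blast
qed

lemma deg:
  assumes "K34_decomp V D" "finite V" "x \<in> V"
  shows "2 * card {B\<in>D. card B = 3 \<and> x \<in> B} + 3 * card {B\<in>D. card B = 4 \<and> x \<in> B} = card V - 1"
proof -
  have fD: "finite D" using decomp_fin assms by blast
  let ?I = "{B\<in>D. x \<in> B}"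
  have sub: "\<And>B. B \<in> D \<Longrightarrow> B \<subseteq> V" using assms(1) unfolding K34_decomp_def by auto
  have c34: "\<And>B. B \<in> D \<Longrightarrow> card B = 3 \<or> card B = 4" using assms(1) unfolding K34_decomp_def by auto
  have U: "V - {x} = (\<Union>B\<in>?I. B - {x})"
  proof
    show "V - {x} \<subseteq> (\<Union>B\<in>?I. B - {x})"
    proof
      fix y assume "y \<in> V - {x}"
      then have "\<exists>!B. B \<in> D \<and> x \<in> B \<and> y \<in> B" using assms(1,3) unfolding K34_decomp_def by blast
      then show "y \<in> (\<Union>B\<in>?I. B - {x})" using \<open>y \<in> V - {x}\<close> by blast
    qed
    show "(\<Union>B\<in>?I. B - {x}) \<subseteq> V - {x}" using sub by blast
  qed
  have "card (V - {x}) = (\<Sum>B\<in>?I. card (B - {x}))"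
    unfolding U
  proof (rule card_UN_disjoint)
    show "finite ?I" using fD by simp
    show "\<forall>i\<in>?I. finite (i - {x})" using sub assms(2) finite_subset by blast
    show "\<forall>i\<in>?I. \<forall>j\<in>?I. i \<noteq> j \<longrightarrow> (i - {x}) \<inter> (j - {x}) = {}"
      using uniq[OF assms(1)] by blast
  qed
  also have "\<dots> = (\<Sum>B\<in>?I. card B - 1)" by simp
  also have "?I = {B\<in>D. card B = 3 \<and> x \<in> B} \<union> {B\<in>D. card B = 4 \<and> x \<in> B}" using c34 by auto
  also have "(\<Sum>B\<in>{B\<in>D. card B = 3 \<and> x \<in> B} \<union> {B\<in>D. card B = 4 \<and> x \<in> B}. card B - 1)
     = (\<Sum>B\<in>{B\<in>D. card B = 3 \<and> x \<in> B}. card B - 1) + (\<Sum>B\<in>{B\<in>D. card B = 4 \<and> x \<in> B}. card B - 1)"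
    by (rule sum.union_disjoint) (use fD in auto)
  also have "\<dots> = 2 * card {B\<in>D. card B = 3 \<and> x \<in> B} + 3 * card {B\<in>D. card B = 4 \<and> x \<in> B}"
    by simp
  finally show ?thesis using assms(2,3) by simp
qed

lemma pairs:
  assumes "K34_decomp V D" "finite V" "S \<subseteq> V"
  shows "(\<Sum>B\<in>D. card (B \<inter> S) choose 2) = card S choose 2"
proof -
  have fD: "finite D" using decomp_fin assms by blast
  have sub: "\<And>B. B \<in> D \<Longrightarrow> B \<subseteq> V" using assms(1) unfolding K34_decomp_def by auto
  have fS: "finite S" using assms finite_subset by blast
  have U: "{e. e \<subseteq> S \<and> card e = 2} = (\<Union>B\<in>D. {e. e \<subseteq> B \<inter> S \<and> card e = 2})"
  proof
    show "{e. e \<subseteq> S \<and> card e = 2} \<subseteq> (\<Union>B\<in>D. {e. e \<subseteq> B \<inter> S \<and> card e = 2})"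
    proof
      fix e assume "e \<in> {e. e \<subseteq> S \<and> card e = 2}"
      then obtain x y where e: "e = {x,y}" "x \<noteq> y" "x \<in> S" "y \<in> S" "card e = 2"
        by (auto simp: card_2_iff)
      then have "x \<in> V" "y \<in> V" using assms(3) by auto
      then have "\<exists>!B. B \<in> D \<and> x \<in> B \<and> y \<in> B" using assms(1) e(2) unfolding K34_decomp_def by blast
      then obtain B where "B \<in> D" "x \<in> B" "y \<in> B" by blast
      then show "e \<in> (\<Union>B\<in>D. {e. e \<subseteq> B \<inter> S \<and> card e = 2})" using e by blast
    qed
    show "(\<Union>B\<in>D. {e. e \<subseteq> B \<inter> S \<and> card e = 2}) \<subseteq> {e. e \<subseteq> S \<and> card e = 2}" by blast
  qed
  have "card S choose 2 = card {e. e \<subseteq> S \<and> card e = 2}" using n_subsets[OF fS] by simp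
  also have "\<dots> = (\<Sum>B\<in>D. card {e. e \<subseteq> B \<inter> S \<and> card e = 2})"
    unfolding U
  proof (rule card_UN_disjoint)
    show "finite D" by fact
    show "\<forall>i\<in>D. finite {e. e \<subseteq> i \<inter> S \<and> card e = 2}" using fS by auto
    show "\<forall>i\<in>D. \<forall>j\<in>D. i \<noteq> j \<longrightarrow> {e. e \<subseteq> i \<inter> S \<and> card e = 2} \<inter> {e. e \<subseteq> j \<inter> S \<and> card e = 2} = {}"
    proof (intro ballI impI)
      fix i j assume ij: "i \<in> D" "j \<in> D" "i \<noteq> j"
      show "{e. e \<subseteq> i \<inter> S \<and> card e = 2} \<inter> {e. e \<subseteq> j \<inter> S \<and> card e = 2} = {}"
      proof (rule ccontr)
        assume "{e. e \<subseteq> i \<inter> S \<and> card e = 2} \<inter> {e. e \<subseteq> j \<inter> S \<and> card e = 2} \<noteq> {}"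
        then obtain e where "e \<subseteq> i" "e \<subseteq> j" "card e = 2" by blast
        then obtain x y where "x \<in> i" "y \<in> i" "x \<in> j" "y \<in> j" "x \<noteq> y" by (auto simp: card_2_iff)
        then show False using uniq[OF assms(1) ij(1,2)] ij(3) by blast
      qed
    qed
  qed
  also have "\<dots> = (\<Sum>B\<in>D. card (B \<inter> S) choose 2)"
  proof (intro sum.cong refl)
    fix B assume "B \<in> D"
    have "{e. e \<subseteq> B \<inter> S \<and> card e = 2} = {e. e \<subseteq> B \<inter> S \<and> card e = 2}" ..
    then show "card {e. e \<subseteq> B \<inter> S \<and> card e = 2} = card (B \<inter> S) choose 2"
      using n_subsets[of "B \<inter> S" 2] fS by simp
  qed
  finally show ?thesis by simp
qed

theorem mainTheorem12:
  fixes V :: "'a set" and D :: "'a set set"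
  assumes "finite V" and "card V = 18"
    and "K34_decomp V D"
    and "alpha D = 13"
  defines "W \<equiv> {x \<in> V. alpha_at D x \<ge> 2}"
  defines "t \<equiv> (\<lambda>i::nat. card {B \<in> triangles D. card (B \<inter> W) = i})"
  shows "(t 0, t 1, t 2, t 3) \<noteq> (1, 1, 6, 5)"
proof
  assume tv: "(t 0, t 1, t 2, t 3) = (1, 1, 6, 5)"
  define T where "T = triangles D"
  define Q where "Q = {B\<in>D. card B = 4}"
  define a where "a = alpha_at D"
  define b where "b = (\<lambda>x. card {B\<in>D. card B = 4 \<and> x \<in> B})"
  have fD: "finite D" using decomp_fin assms by blast
  have fT: "finite T" using fD unfolding T_def triangles_def by simp
  have fQ: "finite Q" using fD unfolding Q_def by simp
  have sub: "\<And>B. B \<in> D \<Longrightarrow> B \<subseteq> V" using assms(3) unfolding K34_decomp_def by auto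
  have c34: "\<And>B. B \<in> D \<Longrightarrow> card B = 3 \<or> card B = 4" using assms(3) unfolding K34_decomp_def by auto
  have WV: "W \<subseteq> V" unfolding W_def by auto
  have fW: "finite W" using WV assms(1) finite_subset by blast
  have cT: "card T = 13" using assms(4) unfolding alpha_def T_def by simp
  have degx: "2 * a x + 3 * b x = 17" if "x \<in> V" for x
  proof -
    have "{B\<in>D. card B = 3 \<and> x \<in> B} = {B \<in> triangles D. x \<in> B}" unfolding triangles_def by auto
    then show ?thesis using deg[OF assms(3,1) that] assms(2) unfolding a_def b_def alpha_at_def by simp
  qed
  have nonW: "a x = 1" if "x \<in> V - W" for x
  proof -
    have "a x < 2" using that unfolding W_def a_def by auto
    moreover have "2 * a x + 3 * b x = 17" using degx that by blast
    ultimately show ?thesis by presburger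
  qed
  have gB: "card (B \<inter> W) \<in> {..3::nat}" if "B \<in> T" for B
  proof -
    have "card B = 3" using that unfolding T_def triangles_def by simp
    then have "finite B" by (metis card.infinite zero_neq_numeral)
    then have "card (B \<inter> W) \<le> card B" by (intro card_mono) auto
    then show ?thesis using \<open>card B = 3\<close> by simp
  qed
  have grp: "(\<Sum>B\<in>T. h (card (B \<inter> W))) = (\<Sum>i\<in>{..3::nat}. h i * t i)" for h :: "nat \<Rightarrow> nat"
  proof -
    have "(\<Sum>B\<in>T. h (card (B \<inter> W))) = (\<Sum>i\<in>{..3::nat}. \<Sum>B\<in>{B. B \<in> T \<and> card (B \<inter> W) = i}. h (card (B \<inter> W)))"
      by (rule sum.group[symmetric]) (use fT gB in auto)
    also have "\<dots> = (\<Sum>i\<in>{..3::nat}. h i * t i)"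
    proof (intro sum.cong refl)
      fix i assume "i \<in> {..3::nat}"
      have "(\<Sum>B\<in>{B. B \<in> T \<and> card (B \<inter> W) = i}. h (card (B \<inter> W))) = (\<Sum>B\<in>{B. B \<in> T \<and> card (B \<inter> W) = i}. h i)"
        by (rule sum.cong) auto
      also have "\<dots> = h i * t i" unfolding t_def T_def by (simp add: mult.commute)
      finally show "(\<Sum>B\<in>{B. B \<in> T \<and> card (B \<inter> W) = i}. h (card (B \<inter> W))) = h i * t i" .
    qed
    finally show ?thesis .
  qed
  have tt: "t 0 = 1" "t 1 = 1" "t 2 = 6" "t 3 = 5" using tv by auto
  have S1: "(\<Sum>B\<in>T. card (B \<inter> W)) = 28"
    using grp[of "\<lambda>i. i"] tt by (simp add: numeral_eq_Suc atMost_Suc)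
  have S2: "(\<Sum>B\<in>T. card (B \<inter> W) choose 2) = 21"
    using grp[of "\<lambda>i. i choose 2"] tt by (simp add: numeral_eq_Suc atMost_Suc)
  have aW: "(\<Sum>x\<in>W. a x) = 28"
    using dc[OF fT fW] S1 unfolding a_def alpha_at_def T_def by simp
  have fVW: "finite (V - W)" using assms(1) by simp
  have aVW: "(\<Sum>B\<in>T. card (B \<inter> (V - W))) = card (V - W)"
  proof -
    have "(\<Sum>B\<in>T. card (B \<inter> (V - W))) = (\<Sum>x\<in>V - W. a x)"
      using dc[OF fT fVW] unfolding a_def alpha_at_def T_def by simp
    also have "\<dots> = (\<Sum>x\<in>V - W. 1)" using nonW by (intro sum.cong) auto
    finally show ?thesis by simp
  qed
  have split3: "card (B \<inter> W) + card (B \<inter> (V - W)) = 3" if "B \<in> T" for B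
  proof -
    have B: "B \<in> D" "card B = 3" using that unfolding T_def triangles_def by auto
    then have "finite B" by (metis card.infinite zero_neq_numeral)
    have "B = (B \<inter> W) \<union> (B \<inter> (V - W))" using sub[OF B(1)] by auto
    then have "card B = card (B \<inter> W) + card (B \<inter> (V - W))"
      by (metis \<open>finite B\<close> card_Un_disjoint finite_Int Diff_disjoint Int_Diff inf_assoc inf_bot_right)
    then show ?thesis using B by simp
  qed
  have "(\<Sum>B\<in>T. card (B \<inter> W) + card (B \<inter> (V - W))) = (\<Sum>B\<in>T. 3::nat)"
    using split3 by (intro sum.cong) auto
  then have "28 + card (V - W) = 39" using S1 aVW cT by (simp add: sum.distrib)
  then have cVW: "card (V - W) = 11" by simp
  have cW: "card W = 7" using card_Diff_subset[OF fW WV] cVW assms(2) by simp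
  have "(\<Sum>x\<in>W. 2 * a x + 3 * b x) = (\<Sum>x\<in>W. 17::nat)" using degx WV by (intro sum.cong) auto
  then have "2 * 28 + 3 * (\<Sum>x\<in>W. b x) = 119" using aW cW
    by (simp add: sum.distrib sum_distrib_left[symmetric])
  then have bW: "(\<Sum>x\<in>W. b x) = 21" by simp
  have aV: "(\<Sum>x\<in>V. a x) = 39"
  proof -
    have "(\<Sum>x\<in>V. a x) = (\<Sum>B\<in>T. card (B \<inter> V))"
      using dc[OF fT assms(1)] unfolding a_def alpha_at_def T_def by simp
    also have "\<dots> = (\<Sum>B\<in>T. 3)"
    proof (rule sum.cong)
      fix B assume "B \<in> T"
      then have "B \<in> D" "card B = 3" unfolding T_def triangles_def by auto
      then show "card (B \<inter> V) = 3" using sub by (simp add: Int_absorb2)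
    qed simp
    finally show ?thesis using cT by simp
  qed
  have "(\<Sum>x\<in>V. 2 * a x + 3 * b x) = (\<Sum>x\<in>V. 17::nat)" using degx by (intro sum.cong) auto
  then have "2 * 39 + 3 * (\<Sum>x\<in>V. b x) = 306" using aV assms(2)
    by (simp add: sum.distrib sum_distrib_left[symmetric])
  then have bV: "(\<Sum>x\<in>V. b x) = 76" by simp
  have "(\<Sum>x\<in>V. b x) = (\<Sum>B\<in>Q. card (B \<inter> V))"
    using dc[OF fQ assms(1)] unfolding b_def Q_def by simp
  also have "\<dots> = (\<Sum>B\<in>Q. 4)"
  proof (rule sum.cong)
    fix B assume "B \<in> Q"
    then have "B \<in> D" "card B = 4" unfolding Q_def by auto
    then show "card (B \<inter> V) = 4" using sub by (simp add: Int_absorb2)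
  qed simp
  finally have cQ: "card Q = 19" using bV by simp
  have QW: "(\<Sum>B\<in>Q. card (B \<inter> W)) = 21"
    using dc[OF fQ fW] bW unfolding b_def Q_def by simp
  have DTQ: "D = T \<union> Q" "T \<inter> Q = {}" using c34 unfolding T_def Q_def triangles_def by auto
  have "(\<Sum>B\<in>D. card (B \<inter> W) choose 2) = 21" using pairs[OF assms(3,1) WV] cW by (simp add: choose_two)
  then have "(\<Sum>B\<in>T. card (B \<inter> W) choose 2) + (\<Sum>B\<in>Q. card (B \<inter> W) choose 2) = 21"
    using DTQ fT fQ by (simp add: sum.union_disjoint)
  then have "(\<Sum>B\<in>Q. card (B \<inter> W) choose 2) = 0" using S2 by simp
  then have "\<forall>B\<in>Q. card (B \<inter> W) choose 2 = 0" using fQ by simp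
  then have le1: "\<forall>B\<in>Q. card (B \<inter> W) \<le> 1" by auto
  have "(\<Sum>B\<in>Q. card (B \<inter> W)) \<le> (\<Sum>B\<in>Q. 1)" using le1 by (intro sum_mono) auto
  then show False using QW cQ by simp
qed

end
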